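(* Under the standing assumptions below, for all $\mu,\nu,\alpha\in\{0,1,2,3\}$ and all $(x^0,x)\in\mathbb R^4$, $$|H^{\mu\nu}(x^0,x)|+\lambda|\partial_{x^\alpha}H^{\mu\nu}(x^0,x)|\le C\delta_h\frac{(1+\lambda^{-1}|x^0|)^{\delta_h}}{1+\lambda^{-1}|x^0|+\lambda^{-1}|x|}.$$
   Context: $g_{\alpha\beta}$ is a Lorentzian metric on $\mathbb R^4$ (coordinates $(x^0,x)$) with $h_{\alpha\beta}=g_{\alpha\beta}-\eta_{\alpha\beta}$, $\eta=\mathrm{diag}(-1,1,1,1)$, and $H^{\alpha\beta}=g^{\alpha\beta}-\eta^{\alpha\beta}$. Standing assumptions: $\lambda>0$; $M$ is the ADM mass with $\frac{GM}{c^2\lambda}<\varepsilon_h$, $\delta_h=C_0\varepsilon_h$ with $\varepsilon_h$ sufficiently small; $h=h^0+h^1$ with $h^0_{\mu\nu}=\chi(\frac{|x|}{\lambda+|x^0|})\frac{GM}{c^2|x|}\delta_{\mu\nu}$ ($\chi$ smooth, $0\le\chi\le1$, $\chi=0$ on $[0,\frac12]$, $\chi=1$ on $[\frac34,\infty)$), and $|\partial^\kappa h^1_{\mu\nu}(x^0,x)|\le\lambda^{-|\kappa|}\frac{\delta_h(1+\lambda^{-1}|x^0|)^{\delta_h}}{(1+\lambda^{-1}(|x|+|x^0|))(1+\lambda^{-1}(|x|-|x^0|)_+)^{\gamma_0}}$ for $|\kappa|\le4$, with $\gamma_0\in[\frac34,1)$. $C$ is a constant independent of $(x^0,x)$. 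*)

theory Defs
  imports "HOL-Analysis.Analysis"
begin

text \<open>Points of R^4 are vectors p :: real^4 with p$0 = x^0 and (p$1,p$2,p$3) = x.\<close>

definition eta :: "real^4^4" where
  "eta = (\<chi> i j. if i = j then (if i = 0 then -1 else 1) else 0)"

text \<open>Lorentzian: congruent (Sylvester) to the Minkowski matrix.\<close>
definition lorentzian :: "real^4^4 \<Rightarrow> bool" where
  "lorentzian A \<longleftrightarrow> (\<exists>P. invertible P \<and> transpose P ** A ** P = eta)"

definition spnorm :: "real^4 \<Rightarrow> real" where
  "spnorm p = sqrt ((p$1)^2 + (p$2)^2 + (p$3)^2)"

text \<open>Coordinate partial derivative d/dx^i and iterated partial derivatives
  (a multi-index kappa is a list of coordinate indices, |kappa| = length).\<close>
definition pd :: "4 \<Rightarrow> (real^4 \<Rightarrow> real) \<Rightarrow> real^4 \<Rightarrow> real" where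
  "pd i f p = deriv (\<lambda>t. f (p + t *\<^sub>R axis i 1)) 0"

fun ipd :: "4 list \<Rightarrow> (real^4 \<Rightarrow> real) \<Rightarrow> real^4 \<Rightarrow> real" where
  "ipd [] f = f"
| "ipd (i # k) f = pd i (ipd k f)"

definition smooth_fun :: "(real \<Rightarrow> real) \<Rightarrow> bool" where
  "smooth_fun f \<longleftrightarrow> (\<forall>n x. (deriv ^^ n) f differentiable (at x))"

text \<open>h^0 with m = GM/c^2.\<close>
definition h0 :: "(real \<Rightarrow> real) \<Rightarrow> real \<Rightarrow> real \<Rightarrow> real^4 \<Rightarrow> real^4^4" where
  "h0 cutoff m lam p = (\<chi> \<mu> \<nu>. if \<mu> = \<nu> then cutoff (spnorm p / (lam + \<bar>p$0\<bar>)) * m / spnorm p else 0)"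

definition h1 :: "(real \<Rightarrow> real) \<Rightarrow> real \<Rightarrow> real \<Rightarrow> (real^4 \<Rightarrow> real^4^4) \<Rightarrow> real^4 \<Rightarrow> real^4^4" where
  "h1 cutoff m lam g p = g p - eta - h0 cutoff m lam p"

definition Hinv :: "(real^4 \<Rightarrow> real^4^4) \<Rightarrow> real^4 \<Rightarrow> real^4^4" where
  "Hinv g p = matrix_inv (g p) - matrix_inv eta"

end

theory Submission
  imports Defs
begin

lemma minv: assumes "invertible (A::real^4^4)"
  shows "A ** matrix_inv A = mat 1" "matrix_inv A ** A = mat 1"
  using someI_ex[OF assms[unfolded invertible_def]] unfolding matrix_inv_def by auto

lemma eta_mult: "(eta ** M) $ i $ j = (if i = 0 then -1 else 1) * (M $ i $ j :: real)"
  unfolding matrix_matrix_mult_def eta_def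
  by (simp add: if_distrib[of "\<lambda>x. x * _"] sum.delta cong: if_cong)

lemma eta_eta: "eta ** eta = mat 1"
  by (simp add: vec_eq_iff eta_mult mat_def del: One_nat_def, simp add: eta_def)

lemma eta_inv: "matrix_inv eta = eta"
proof -
  have i: "invertible eta" unfolding invertible_def using eta_eta by blast
  have "matrix_inv eta = matrix_inv eta ** (eta ** eta)" by (simp add: eta_eta)
  also have "\<dots> = eta" by (simp add: matrix_mul_assoc minv[OF i])
  finally show ?thesis .
qed

lemma lor_inv: assumes "lorentzian A" shows "invertible A"
proof -
  obtain P where P: "invertible P" "transpose P ** A ** P = eta" using assms lorentzian_def by blast
  have i: "invertible eta" unfolding invertible_def using eta_eta by blast
  have "det eta \<noteq> 0" using i invertible_det_nz by blast
  then have "det (transpose P ** A ** P) \<noteq> 0" using P by simp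
  then have "det A \<noteq> 0" by (simp add: det_mul)
  then show ?thesis using invertible_det_nz by blast
qed

lemma mm_rdistrib: "((A::real^4^4) + B) ** C = A ** C + B ** C"
  by (vector matrix_matrix_mult_def sum.distrib[symmetric] field_simps)

lemma mm_ldiff: "(A::real^4^4) ** (B - C) = A ** B - A ** C"
  by (vector matrix_matrix_mult_def sum_subtractf[symmetric] field_simps)

lemma mm_rdiff: "((A::real^4^4) - B) ** C = A ** C - B ** C"
  by (vector matrix_matrix_mult_def sum_subtractf[symmetric] field_simps)

lemma mm_entry: "((A::real^4^4) ** B) $ i $ j = (\<Sum>k\<in>UNIV. A$i$k * B$k$j)"
  by (simp add: matrix_matrix_mult_def)

lemma inv_repr: assumes "invertible g"
  shows "matrix_inv g = eta - eta ** ((g - eta) ** matrix_inv g)"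
proof -
  let ?X = "matrix_inv g"
  have "eta ** (g ** ?X) = eta" using minv[OF assms] by simp
  moreover have "g = eta + (g - eta)" by simp
  ultimately have "eta ** ((eta + (g - eta)) ** ?X) = eta" by metis
  then have "eta ** (eta ** ?X) + eta ** ((g - eta) ** ?X) = eta"
    by (simp only: mm_rdistrib matrix_add_ldistrib)
  then have "?X + eta ** ((g - eta) ** ?X) = eta"
    by (simp add: matrix_mul_assoc eta_eta)
  then show ?thesis by (simp add: algebra_simps)
qed

lemma inv_bound: assumes "invertible g" "\<forall>i j. \<bar>(g - eta) $ i $ j\<bar> \<le> 1/8"
  shows "\<bar>matrix_inv g $ i $ j\<bar> \<le> 2"
proof -
  let ?X = "matrix_inv g" let ?h = "g - eta"
  have e: "\<bar>?X $ i $ j\<bar> \<le> 1 + (1/8) * (\<Sum>l\<in>UNIV. \<bar>?X $ l $ j\<bar>)" for i j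
  proof -
    have "?X $ i $ j = eta $ i $ j - (if i = 0 then -1 else 1) * (?h ** ?X) $ i $ j"
      using inv_repr[OF assms(1)] by (metis eta_mult vector_minus_component)
    then have "\<bar>?X $ i $ j\<bar> \<le> 1 + \<bar>(?h ** ?X) $ i $ j\<bar>"
      by (auto simp: eta_def abs_if)
    also have "\<bar>(?h ** ?X) $ i $ j\<bar> \<le> (\<Sum>l\<in>UNIV. \<bar>?h $ i $ l\<bar> * \<bar>?X $ l $ j\<bar>)"
      unfolding mm_entry by (rule order_trans[OF sum_abs]) (simp add: abs_mult)
    also have "\<dots> \<le> (\<Sum>l\<in>UNIV. (1/8) * \<bar>?X $ l $ j\<bar>)"
      by (rule sum_mono, rule mult_right_mono) (use assms(2) in auto)
    finally show ?thesis by (simp add: sum_distrib_left)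
  qed
  have c: "(\<Sum>l\<in>UNIV. \<bar>?X $ l $ j\<bar>) \<le> 8" for j
  proof -
    have "(\<Sum>l\<in>UNIV. \<bar>?X $ l $ j\<bar>) \<le> (\<Sum>l\<in>(UNIV::4 set). 1 + (1/8) * (\<Sum>l\<in>UNIV. \<bar>?X $ l $ j\<bar>))"
      by (rule sum_mono) (rule e)
    also have "\<dots> = 4 + (1/2) * (\<Sum>l\<in>UNIV. \<bar>?X $ l $ j\<bar>)" by simp
    finally show ?thesis by simp
  qed
  show ?thesis using e[of i j] c[of j] by simp
qed

lemma H_bound: assumes "invertible g" "\<forall>i j. \<bar>(g - eta) $ i $ j\<bar> \<le> 1/8"
  shows "\<bar>(matrix_inv g - eta) $ i $ j\<bar> \<le> 2 * (\<Sum>l\<in>UNIV. \<bar>(g - eta) $ i $ l\<bar>)"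
proof -
  let ?X = "matrix_inv g" let ?h = "g - eta"
  have e: "?X = eta - eta ** (?h ** ?X)" by (rule inv_repr[OF assms(1)])
  have "?X - eta = (eta - eta ** (?h ** ?X)) - eta" using e by (rule arg_cong)
  also have "\<dots> = - (eta ** (?h ** ?X))" by simp
  finally have "(?X - eta) $ i $ j = - ((if i = 0 then -1 else 1) * (?h ** ?X) $ i $ j)"
    by (simp add: eta_mult)
  then have "\<bar>(?X - eta) $ i $ j\<bar> = \<bar>(?h ** ?X) $ i $ j\<bar>" by (simp add: abs_if)
  also have "\<dots> \<le> (\<Sum>l\<in>UNIV. \<bar>?h $ i $ l\<bar> * \<bar>?X $ l $ j\<bar>)"
    unfolding mm_entry by (rule order_trans[OF sum_abs]) (simp add: abs_mult)
  also have "\<dots> \<le> (\<Sum>l\<in>UNIV. \<bar>?h $ i $ l\<bar> * 2)"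
    by (rule sum_mono, rule mult_left_mono) (use inv_bound[OF assms] in auto)
  also have "\<dots> = 2 * (\<Sum>l\<in>UNIV. \<bar>?h $ i $ l\<bar>)" by (simp add: sum_distrib_left mult.commute)
  finally show ?thesis .
qed

lemma inv_diff: assumes "invertible g1" "invertible g2"
  "\<forall>i j. \<bar>(g1 - eta) $ i $ j\<bar> \<le> 1/8" "\<forall>i j. \<bar>(g2 - eta) $ i $ j\<bar> \<le> 1/8"
  shows "\<bar>(matrix_inv g1 - matrix_inv g2) $ i $ j\<bar> \<le> 4 * (\<Sum>k\<in>UNIV. \<Sum>l\<in>UNIV. \<bar>(g1 - g2) $ k $ l\<bar>)"
proof -
  let ?X = "matrix_inv g1" let ?Y = "matrix_inv g2"
  have "?X ** (g2 - g1) ** ?Y = (?X ** g2) ** ?Y - (?X ** g1) ** ?Y" by (simp add: mm_ldiff mm_rdiff)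
  also have "\<dots> = ?X ** (g2 ** ?Y) - (?X ** g1) ** ?Y" by (simp add: matrix_mul_assoc)
  also have "\<dots> = ?X - ?Y" by (simp add: minv[OF assms(1)] minv[OF assms(2)])
  finally have eq: "?X - ?Y = ?X ** (g2 - g1) ** ?Y" by simp
  have "(?X ** (g2 - g1) ** ?Y) $ i $ j = (\<Sum>l\<in>UNIV. \<Sum>k\<in>UNIV. ?X $ i $ k * (g2 - g1) $ k $ l * ?Y $ l $ j)"
    by (simp add: mm_entry sum_distrib_right)
  also have "\<dots> = (\<Sum>k\<in>UNIV. \<Sum>l\<in>UNIV. ?X $ i $ k * (g2 - g1) $ k $ l * ?Y $ l $ j)"
    by (rule sum.swap)
  finally have "(?X - ?Y) $ i $ j = (\<Sum>k\<in>UNIV. \<Sum>l\<in>UNIV. ?X $ i $ k * (g2 - g1) $ k $ l * ?Y $ l $ j)"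
    by (simp only: eq)
  then have "\<bar>(?X - ?Y) $ i $ j\<bar> \<le> (\<Sum>k\<in>UNIV. \<Sum>l\<in>UNIV. \<bar>?X $ i $ k * (g2 - g1) $ k $ l * ?Y $ l $ j\<bar>)"
    by (simp only: ) (rule order_trans[OF sum_abs sum_mono[OF sum_abs]])
  also have "\<dots> \<le> (\<Sum>k\<in>UNIV. \<Sum>l\<in>UNIV. 4 * \<bar>(g1 - g2) $ k $ l\<bar>)"
  proof (intro sum_mono)
    fix k l
    have "\<bar>?X $ i $ k * (g2 - g1) $ k $ l * ?Y $ l $ j\<bar> = \<bar>?X $ i $ k\<bar> * \<bar>?Y $ l $ j\<bar> * \<bar>(g1 - g2) $ k $ l\<bar>"
      by (simp add: abs_mult abs_minus_commute)
    also have "\<dots> \<le> (2 * 2) * \<bar>(g1 - g2) $ k $ l\<bar>"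
      by (intro mult_right_mono mult_mono inv_bound assms) auto
    finally show "\<bar>?X $ i $ k * (g2 - g1) $ k $ l * ?Y $ l $ j\<bar> \<le> 4 * \<bar>(g1 - g2) $ k $ l\<bar>" by simp
  qed
  finally show ?thesis by (simp add: sum_distrib_left)
qed

lemma phi_rderiv:
  fixes cutoff S T :: "real \<Rightarrow> real" and B lam m T' :: real
  assumes cd: "\<forall>x. (cutoff has_real_derivative deriv cutoff x) (at x)"
    and c01: "\<forall>s. 0 \<le> cutoff s \<and> cutoff s \<le> 1"
    and c0: "\<forall>s\<in>{0..1/2}. cutoff s = 0"
    and c1: "\<forall>s\<ge>3/4. cutoff s = 1"
    and B: "\<forall>s\<in>{0..1}. \<bar>deriv cutoff s\<bar> \<le> B"
    and lam: "lam > 0" and m: "m \<ge> 0"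
    and Snn: "\<forall>t. S t \<ge> 0" and Sc: "isCont S 0"
    and Sd: "S 0 > 0 \<Longrightarrow> \<exists>S'. (S has_real_derivative S') (at 0) \<and> \<bar>S'\<bar> \<le> 1"
    and Tnn: "\<forall>t. T t \<ge> 0" and Td: "(T has_real_derivative T') (at_right 0)" and T'b: "\<bar>T'\<bar> \<le> 1"
  shows "\<exists>E. ((\<lambda>t. cutoff (S t / (lam + T t)) * m / S t) has_real_derivative E) (at_right 0)
     \<and> lam * \<bar>E\<bar> \<le> (8*B+6) * m / (lam + T 0 + S 0)"
proof -
  have B0: "B \<ge> 0" using B by (metis abs_ge_zero atLeastAtMost_iff order_trans zero_le_one order_refl)
  define D where "D = lam + T 0"
  have D0: "D > 0" "lam \<le> D" using lam Tnn by (auto simp: D_def add_pos_nonneg)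
  define s0 where "s0 = S 0 / D"
  let ?phi = "\<lambda>t. cutoff (S t / (lam + T t)) * m / S t"
  show ?thesis
  proof (cases "s0 < 1/2")
    case True
    have "((\<lambda>t. S t / (lam + T t)) \<longlongrightarrow> S 0 / (lam + T 0)) (at_right 0)"
    proof (intro tendsto_intros)
      show "(S \<longlongrightarrow> S 0) (at_right 0)" using Sc by (simp add: isCont_def filterlim_at_split)
      show "(T \<longlongrightarrow> T 0) (at_right 0)" using DERIV_continuous[OF Td] by (simp add: continuous_within)
      show "lam + T 0 \<noteq> 0" using D0 D_def by simp
    qed
    then have "eventually (\<lambda>t. S t / (lam + T t) < 1/2) (at_right 0)"
      using True unfolding s0_def D_def by (rule order_tendstoD(2))
    then have ev: "eventually (\<lambda>t. ?phi t = 0) (at_right 0)"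
    proof (rule eventually_mono)
      fix t assume "S t / (lam + T t) < 1/2"
      moreover have "S t / (lam + T t) \<ge> 0" using Snn Tnn lam by (simp add: add_pos_nonneg less_imp_le)
      ultimately show "?phi t = 0" using c0 by simp
    qed
    have p0: "?phi 0 = 0"
    proof -
      have "S 0 / (lam + T 0) \<ge> 0" using Snn Tnn lam by (simp add: add_pos_nonneg less_imp_le)
      then show ?thesis using c0 True unfolding s0_def D_def by simp
    qed
    have "(?phi has_real_derivative 0) (at_right 0)"
      unfolding has_field_derivative_iff
      by (rule tendsto_eventually) (use ev p0 in \<open>auto elim: eventually_mono\<close>)
    moreover have "0 \<le> (8*B+6) * m / (lam + T 0 + S 0)"
      using B0 m lam Tnn Snn by (simp add: add_pos_nonneg)
    ultimately show ?thesis by auto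
  next
    case False
    have S0: "S 0 \<ge> D / 2" using False unfolding s0_def using D0 by (simp add: field_simps)
    then have S0p: "S 0 > 0" using D0 by simp
    obtain S' where S': "(S has_real_derivative S') (at 0)" "\<bar>S'\<bar> \<le> 1" using Sd S0p by blast
    define s' where "s' = (S' * D - S 0 * T') / (D * D)"
    have sd: "((\<lambda>t. S t / (lam + T t)) has_real_derivative s') (at_right 0)"
      unfolding s'_def D_def
      by (rule DERIV_divide[OF has_field_derivative_at_within[OF S'(1)] DERIV_add[OF DERIV_const Td, simplified]])
         (use D0 D_def in simp)
    define c' where "c' = deriv cutoff s0"
    have cd0: "(cutoff has_real_derivative c') (at s0)" using cd c'_def by simp
    have chain: "((\<lambda>t. cutoff (S t / (lam + T t))) has_real_derivative c' * s') (at_right 0)"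
      using DERIV_chain'[OF sd, of cutoff c'] cd0 unfolding s0_def D_def by simp
    define E where "E = ((c' * s' * m) * S 0 - (cutoff s0 * m) * S') / (S 0 * S 0)"
    have cm: "((\<lambda>t. cutoff (S t / (lam + T t)) * m) has_real_derivative c' * s' * m) (at_right 0)"
      using DERIV_cmult_right[OF chain, of m] by simp
    have der0: "(?phi has_real_derivative ((c' * s' * m) * S 0 - (cutoff (S 0 / (lam + T 0)) * m) * S') / (S 0 * S 0)) (at_right 0)"
      by (rule DERIV_divide[OF cm has_field_derivative_at_within[OF S'(1)]]) (use S0p in simp)
    have der: "(?phi has_real_derivative E) (at_right 0)"
      using der0 unfolding E_def s0_def D_def .
    have Eeq: "E = c' * s' * m / S 0 - cutoff s0 * m * S' / (S 0 * S 0)"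
      unfolding E_def using S0p by (simp add: field_simps)
    have s'b: "\<bar>s'\<bar> \<le> (D + S 0) / (D * D)"
    proof -
      have "\<bar>S' * D - S 0 * T'\<bar> \<le> \<bar>S' * D\<bar> + \<bar>S 0 * T'\<bar>" by (rule abs_triangle_ineq4)
      also have "\<dots> = \<bar>S'\<bar> * D + S 0 * \<bar>T'\<bar>" using D0 S0p by (simp add: abs_mult)
      also have "\<dots> \<le> 1 * D + S 0 * 1"
        using S' T'b D0 S0p by (intro add_mono mult_mono) auto
      finally have n: "\<bar>S' * D - S 0 * T'\<bar> \<le> D + S 0" by simp
      have "\<bar>s'\<bar> = \<bar>S' * D - S 0 * T'\<bar> / (D * D)" using D0 by (simp add: s'_def abs_divide)
      also have "\<dots> \<le> (D + S 0) / (D * D)" using n D0 by (intro divide_right_mono) auto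
      finally show ?thesis .
    qed
    have t1: "lam * (\<bar>c'\<bar> * \<bar>s'\<bar> * m / S 0) \<le> 8 * B * m / (D + S 0)"
    proof (cases "s0 > 1")
      case True
      have "c' = 0"
      proof (rule DERIV_local_const[OF cd0, of "s0 - 3/4"])
        show "0 < s0 - 3/4" using True by simp
        show "\<forall>y. \<bar>s0 - y\<bar> < s0 - 3 / 4 \<longrightarrow> cutoff s0 = cutoff y"
        proof (intro allI impI)
          fix y assume "\<bar>s0 - y\<bar> < s0 - 3 / 4"
          then have "y \<ge> 3/4" by arith
          then show "cutoff s0 = cutoff y" using c1 True by simp
        qed
      qed
      then show ?thesis using B0 m D0 S0p by simp
    next
      case False
      then have S0D: "S 0 \<le> D" unfolding s0_def using D0 by (simp add: field_simps)
      have "s0 \<in> {0..1}" using False S0p D0 by (simp add: s0_def)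
      then have c'b: "\<bar>c'\<bar> \<le> B" using B unfolding c'_def by blast
      have num: "\<bar>c'\<bar> * \<bar>s'\<bar> * m \<le> B * ((D + S 0) / (D * D)) * m"
        using c'b s'b m B0 by (intro mult_right_mono mult_mono) auto
      have q: "\<bar>c'\<bar> * \<bar>s'\<bar> * m / S 0 \<le> B * ((D + S 0) / (D * D)) * m / (D / 2)"
        by (rule frac_le) (use num S0 D0 B0 m in auto)
      have "lam * (\<bar>c'\<bar> * \<bar>s'\<bar> * m / S 0) \<le> D * (B * ((D + S 0) / (D * D)) * m / (D / 2))"
        by (rule mult_mono) (use q D0 S0p lam m in auto)
      also have "\<dots> = 2 * B * m * ((D + S 0) / (D * D))" using D0 by (simp add: field_simps)
      also have "\<dots> \<le> 2 * B * m * (4 / (D + S 0))"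
      proof (rule mult_left_mono)
        have "D + S 0 \<le> 2 * D" using S0D by simp
        then have "(D + S 0) * (D + S 0) \<le> (2 * D) * (2 * D)" using S0p D0
          by (intro mult_mono) auto
        then show "(D + S 0) / (D * D) \<le> 4 / (D + S 0)" using S0p D0
          by (simp add: divide_le_eq le_divide_eq mult.commute mult.left_commute)
        show "0 \<le> 2 * B * m" using B0 m by simp
      qed
      also have "\<dots> = 8 * B * m / (D + S 0)" by simp
      finally show ?thesis .
    qed
    have t2: "lam * (cutoff s0 * m * \<bar>S'\<bar> / (S 0 * S 0)) \<le> 6 * m / (D + S 0)"
    proof -
      have cs: "0 \<le> cutoff s0" "cutoff s0 \<le> 1" using c01 by auto
      have "cutoff s0 * m * \<bar>S'\<bar> \<le> 1 * m * 1" using cs m S' by (intro mult_mono) auto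
      then have q: "cutoff s0 * m * \<bar>S'\<bar> / (S 0 * S 0) \<le> 1 * m * 1 / (S 0 * S 0)"
        by (rule divide_right_mono) simp
      have "lam * (cutoff s0 * m * \<bar>S'\<bar> / (S 0 * S 0)) \<le> (2 * S 0) * (1 * m * 1 / (S 0 * S 0))"
        by (rule mult_mono) (use q lam D0 S0 cs m in auto)
      also have "\<dots> = 6 * m / (3 * S 0)" using S0p by (simp add: field_simps)
      also have "\<dots> \<le> 6 * m / (D + S 0)"
        by (rule divide_left_mono) (use S0 S0p D0 m in auto)
      finally show ?thesis .
    qed
    have "lam * \<bar>E\<bar> \<le> lam * (\<bar>c'\<bar> * \<bar>s'\<bar> * m / S 0) + lam * (cutoff s0 * m * \<bar>S'\<bar> / (S 0 * S 0))"
    proof -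
      have cs: "0 \<le> cutoff s0" using c01 by auto
      have "\<bar>E\<bar> \<le> \<bar>c' * s' * m / S 0\<bar> + \<bar>cutoff s0 * m * S' / (S 0 * S 0)\<bar>"
        unfolding Eeq by (rule abs_triangle_ineq4)
      also have "\<dots> = \<bar>c'\<bar> * \<bar>s'\<bar> * m / S 0 + cutoff s0 * m * \<bar>S'\<bar> / (S 0 * S 0)"
        using S0p m cs by (simp add: abs_mult abs_divide)
      finally have "lam * \<bar>E\<bar> \<le> lam * (\<bar>c'\<bar> * \<bar>s'\<bar> * m / S 0 + cutoff s0 * m * \<bar>S'\<bar> / (S 0 * S 0))"
        using lam by (intro mult_left_mono) auto
      then show ?thesis by (simp only: distrib_left)
    qed
    also have "\<dots> \<le> 8 * B * m / (D + S 0) + 6 * m / (D + S 0)" using t1 t2 by simp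
    also have "\<dots> = (8*B+6) * m / (lam + T 0 + S 0)" unfolding D_def by (simp add: add_divide_distrib ring_distribs)
    finally show ?thesis using der by blast
  qed
qed

lemma abs_rderiv:
  fixes a c :: real assumes "c \<ge> 0"
  shows "\<exists>T'. ((\<lambda>t. \<bar>a + t * c\<bar>) has_real_derivative T') (at_right 0) \<and> \<bar>T'\<bar> \<le> \<bar>c\<bar>"
proof (cases "a \<ge> 0")
  case True
  have ev: "eventually (\<lambda>t. a + t * c = \<bar>a + t * c\<bar>) (at_right 0)"
    by (rule eventually_at_rightI[of 0 1]) (use True assms in auto)
  have "((\<lambda>t. a + t * c) has_real_derivative c) (at_right 0)"
    by (auto intro!: derivative_eq_intros)
  then have "((\<lambda>t. \<bar>a + t * c\<bar>) has_real_derivative c) (at_right 0)"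
    using has_field_derivative_cong_eventually[OF ev] True by simp
  then show ?thesis by auto
next
  case False
  have "((\<lambda>t. a + t * c) \<longlongrightarrow> a + 0 * c) (at_right 0)" by (intro tendsto_intros)
  then have "eventually (\<lambda>t. a + t * c < 0) (at_right 0)" using False by (simp add: order_tendstoD)
  then have ev: "eventually (\<lambda>t. - (a + t * c) = \<bar>a + t * c\<bar>) (at_right 0)"
    by (rule eventually_mono) simp
  have "((\<lambda>t. - (a + t * c)) has_real_derivative - c) (at_right 0)"
    by (auto intro!: derivative_eq_intros)
  then have "((\<lambda>t. \<bar>a + t * c\<bar>) has_real_derivative - c) (at_right 0)"
    using has_field_derivative_cong_eventually[OF ev] False by simp
  then show ?thesis by auto
qed

lemma axis_comp: "axis (i::4) (1::real) $ k = (if k = i then 1 else 0)"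
  by (simp add: axis_def)

lemma sp_line: "spnorm (p + t *\<^sub>R axis i 1) = sqrt ((p$1 + t * axis i 1 $ 1)^2 + (p$2 + t * axis i 1 $ 2)^2 + (p$3 + t * axis i 1 $ 3)^2)"
  by (simp add: spnorm_def)

lemma sp_cont: "isCont (\<lambda>t. spnorm (p + t *\<^sub>R axis i 1)) x"
  unfolding sp_line by (intro continuous_intros)

lemma sp_deriv: assumes "spnorm p > 0"
  shows "\<exists>S'. ((\<lambda>t. spnorm (p + t *\<^sub>R axis i 1)) has_real_derivative S') (at 0) \<and> \<bar>S'\<bar> \<le> 1"
proof -
  define c1 where "c1 = axis i (1::real) $ 1" define c2 where "c2 = axis i (1::real) $ 2" define c3 where "c3 = axis i (1::real) $ 3"
  have sp: "spnorm p = sqrt ((p$1)^2 + (p$2)^2 + (p$3)^2)" by (simp add: spnorm_def)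
  have pos: "(p$1)^2 + (p$2)^2 + (p$3)^2 > 0" using assms sp by simp
  have d: "((\<lambda>t. sqrt ((p$1 + t * c1)^2 + (p$2 + t * c2)^2 + (p$3 + t * c3)^2)) has_real_derivative
     (p$1 * c1 + p$2 * c2 + p$3 * c3) / spnorm p) (at 0)"
    using pos unfolding sp
    by (auto intro!: derivative_eq_intros simp: field_simps power2_eq_square)
  have b: "\<bar>p$1 * c1 + p$2 * c2 + p$3 * c3\<bar> \<le> spnorm p"
  proof -
    have s1: "\<bar>p$1\<bar> \<le> spnorm p" unfolding sp by (rule real_le_rsqrt) (simp add: power2_abs)
    have s2: "\<bar>p$2\<bar> \<le> spnorm p" unfolding sp by (rule real_le_rsqrt) (simp add: power2_abs)
    have s3: "\<bar>p$3\<bar> \<le> spnorm p" unfolding sp by (rule real_le_rsqrt) (simp add: power2_abs)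
    show ?thesis using exhaust_4[of i] s1 s2 s3 assms
      by (auto simp: c1_def c2_def c3_def axis_comp)
  qed
  have "\<bar>(p$1 * c1 + p$2 * c2 + p$3 * c3) / spnorm p\<bar> \<le> 1"
    using b assms by (simp add: abs_divide divide_le_eq)
  moreover have "((\<lambda>t. spnorm (p + t *\<^sub>R axis i 1)) has_real_derivative (p$1 * c1 + p$2 * c2 + p$3 * c3) / spnorm p) (at 0)"
    using d unfolding sp_line c1_def c2_def c3_def .
  ultimately show ?thesis by blast
qed


lemma div_le_aux: "(0::real) \<le> N \<Longrightarrow> 0 < Dn \<Longrightarrow> 1 \<le> X \<Longrightarrow> N / (Dn * X) \<le> N / Dn"
  by (rule divide_left_mono) (auto simp: mult_le_cancel_left1)

lemma phi_val:
  fixes cutoff :: "real \<Rightarrow> real"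
  assumes c01: "\<forall>s. 0 \<le> cutoff s \<and> cutoff s \<le> 1"
    and c0: "\<forall>s\<in>{0..1/2}. cutoff s = 0"
    and lam: "lam > 0" and m: "m \<ge> 0" and S: "S \<ge> 0" and T: "T \<ge> 0"
  shows "\<bar>cutoff (S / (lam + T)) * m / S\<bar> \<le> 3 * m / (lam + T + S)"
proof (cases "S / (lam + T) \<le> 1/2")
  case True
  have "S / (lam + T) \<ge> 0" using S T lam by simp
  then show ?thesis using True c0 m lam T S by simp
next
  case False
  then have S2: "S > (lam + T) / 2" using lam T by (simp add: field_simps)
  then have Sp: "S > 0" using lam T by simp
  have cs: "0 \<le> cutoff (S / (lam + T))" "cutoff (S / (lam + T)) \<le> 1" using c01 by auto
  have "\<bar>cutoff (S / (lam + T)) * m / S\<bar> = cutoff (S / (lam + T)) * m / S"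
    using cs m Sp by simp
  also have "\<dots> \<le> 1 * m / S" using cs m Sp by (intro divide_right_mono mult_right_mono) auto
  also have "\<dots> = 3 * m / (3 * S)" by simp
  also have "\<dots> \<le> 3 * m / (lam + T + S)"
    by (rule divide_left_mono) (use S2 lam T m Sp in auto)
  finally show ?thesis .
qed

theorem corollary3p2:
  fixes cutoff :: "real \<Rightarrow> real" and C0 \<gamma>0 :: real
  assumes "smooth_fun cutoff"
    and "\<forall>s. 0 \<le> cutoff s \<and> cutoff s \<le> 1"
    and "\<forall>s\<in>{0..1/2}. cutoff s = 0"
    and "\<forall>s\<ge>3/4. cutoff s = 1"
    and "C0 > 0" and "3/4 \<le> \<gamma>0" and "\<gamma>0 < 1"
  shows "\<exists>\<epsilon>0>0. \<exists>C. \<forall>\<epsilon>h \<delta>h lam G c M g.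
    0 < \<epsilon>h \<and> \<epsilon>h < \<epsilon>0 \<and> \<delta>h = C0 * \<epsilon>h \<and> 0 < lam \<and> 0 < G \<and> 0 < c \<and> 0 \<le> M
    \<and> G * M / (c^2 * lam) < \<epsilon>h
    \<and> (\<forall>p. lorentzian (g p))
    \<and> (\<forall>\<mu> \<nu> \<kappa> i p. length \<kappa> < 4 \<longrightarrow>
          (\<lambda>t. ipd \<kappa> (\<lambda>q. h1 cutoff (G * M / c^2) lam g q $ \<mu> $ \<nu>) (p + t *\<^sub>R axis i 1))
            differentiable (at 0))
    \<and> (\<forall>\<mu> \<nu> \<kappa> p. length \<kappa> \<le> 4 \<longrightarrow>
          \<bar>ipd \<kappa> (\<lambda>q. h1 cutoff (G * M / c^2) lam g q $ \<mu> $ \<nu>) p\<bar>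
          \<le> inverse lam ^ length \<kappa> * (\<delta>h * (1 + \<bar>p$0\<bar> / lam) powr \<delta>h
             / ((1 + (spnorm p + \<bar>p$0\<bar>) / lam)
                * (1 + max 0 (spnorm p - \<bar>p$0\<bar>) / lam) powr \<gamma>0)))
    \<longrightarrow> (\<forall>p \<mu> \<nu> \<alpha>.
          \<bar>Hinv g p $ \<mu> $ \<nu>\<bar>
            \<le> C * \<delta>h * (1 + \<bar>p$0\<bar> / lam) powr \<delta>h / (1 + \<bar>p$0\<bar> / lam + spnorm p / lam)
        \<and> (\<forall>D. ((\<lambda>t. Hinv g (p + t *\<^sub>R axis \<alpha> 1) $ \<mu> $ \<nu>) has_real_derivative D) (at 0) \<longrightarrow>
             \<bar>Hinv g p $ \<mu> $ \<nu>\<bar> + lam * \<bar>D\<bar>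
               \<le> C * \<delta>h * (1 + \<bar>p$0\<bar> / lam) powr \<delta>h / (1 + \<bar>p$0\<bar> / lam + spnorm p / lam)))"
proof -
  have cd: "\<forall>x. (cutoff has_real_derivative deriv cutoff x) (at x)"
    using assms(1) unfolding smooth_fun_def
    by (metis DERIV_deriv_iff_real_differentiable funpow_0)
  have dc: "continuous_on {0..1} (deriv cutoff)"
  proof (rule continuous_at_imp_continuous_on, rule ballI)
    fix x :: real
    have "(deriv ^^ 1) cutoff differentiable (at x)" using assms(1) unfolding smooth_fun_def by blast
    then show "isCont (deriv cutoff) x" by (simp add: differentiable_imp_continuous_within)
  qed
  obtain B where B: "\<forall>s\<in>{0..1}. \<bar>deriv cutoff s\<bar> \<le> B"
    using compact_imp_bounded[OF compact_continuous_image[OF dc compact_Icc]] unfolding bounded_real by auto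
  have B0: "B \<ge> 0" using B by (metis abs_ge_zero atLeastAtMost_iff order_trans zero_le_one order_refl)
  define K0 where "K0 = 8 * B + 6"
  have K00: "K0 \<ge> 0" using B0 by (simp add: K0_def)
  define e0 where "e0 = 1 / (8 * (C0 + 3))"
  define C where "C = 8 * (1 + 3 / C0) + 64 * (1 + K0 / C0)"
  have e0p: "e0 > 0" using assms(5) by (simp add: e0_def)
  have main: "\<forall>\<epsilon>h \<delta>h lam G c M g.
    0 < \<epsilon>h \<and> \<epsilon>h < e0 \<and> \<delta>h = C0 * \<epsilon>h \<and> 0 < lam \<and> 0 < G \<and> 0 < c \<and> 0 \<le> M
    \<and> G * M / (c^2 * lam) < \<epsilon>h
    \<and> (\<forall>p. lorentzian (g p))
    \<and> (\<forall>\<mu> \<nu> \<kappa> i p. length \<kappa> < 4 \<longrightarrow>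
          (\<lambda>t. ipd \<kappa> (\<lambda>q. h1 cutoff (G * M / c^2) lam g q $ \<mu> $ \<nu>) (p + t *\<^sub>R axis i 1))
            differentiable (at 0))
    \<and> (\<forall>\<mu> \<nu> \<kappa> p. length \<kappa> \<le> 4 \<longrightarrow>
          \<bar>ipd \<kappa> (\<lambda>q. h1 cutoff (G * M / c^2) lam g q $ \<mu> $ \<nu>) p\<bar>
          \<le> inverse lam ^ length \<kappa> * (\<delta>h * (1 + \<bar>p$0\<bar> / lam) powr \<delta>h
             / ((1 + (spnorm p + \<bar>p$0\<bar>) / lam)
                * (1 + max 0 (spnorm p - \<bar>p$0\<bar>) / lam) powr \<gamma>0)))
    \<longrightarrow> (\<forall>p \<mu> \<nu> \<alpha>.
          \<bar>Hinv g p $ \<mu> $ \<nu>\<bar>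
            \<le> C * \<delta>h * (1 + \<bar>p$0\<bar> / lam) powr \<delta>h / (1 + \<bar>p$0\<bar> / lam + spnorm p / lam)
        \<and> (\<forall>D. ((\<lambda>t. Hinv g (p + t *\<^sub>R axis \<alpha> 1) $ \<mu> $ \<nu>) has_real_derivative D) (at 0) \<longrightarrow>
             \<bar>Hinv g p $ \<mu> $ \<nu>\<bar> + lam * \<bar>D\<bar>
               \<le> C * \<delta>h * (1 + \<bar>p$0\<bar> / lam) powr \<delta>h / (1 + \<bar>p$0\<bar> / lam + spnorm p / lam)))"
  proof (intro allI impI)
    fix eh dh lam G c M and g :: "real^4 \<Rightarrow> real^4^4"
    assume A: "0 < eh \<and> eh < e0 \<and> dh = C0 * eh \<and> 0 < lam \<and> 0 < G \<and> 0 < c \<and> 0 \<le> M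
    \<and> G * M / (c^2 * lam) < eh
    \<and> (\<forall>p. lorentzian (g p))
    \<and> (\<forall>\<mu> \<nu> \<kappa> i p. length \<kappa> < 4 \<longrightarrow>
          (\<lambda>t. ipd \<kappa> (\<lambda>q. h1 cutoff (G * M / c^2) lam g q $ \<mu> $ \<nu>) (p + t *\<^sub>R axis i 1))
            differentiable (at 0))
    \<and> (\<forall>\<mu> \<nu> \<kappa> p. length \<kappa> \<le> 4 \<longrightarrow>
          \<bar>ipd \<kappa> (\<lambda>q. h1 cutoff (G * M / c^2) lam g q $ \<mu> $ \<nu>) p\<bar>
          \<le> inverse lam ^ length \<kappa> * (dh * (1 + \<bar>p$0\<bar> / lam) powr dh
             / ((1 + (spnorm p + \<bar>p$0\<bar>) / lam)
                * (1 + max 0 (spnorm p - \<bar>p$0\<bar>) / lam) powr \<gamma>0)))"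
    let ?m = "G * M / c^2"
    have eh: "0 < eh" "eh < e0" and dh: "dh = C0 * eh" and lam: "0 < lam"
      and lor: "\<forall>p. lorentzian (g p)" using A by auto
    have mpos: "?m \<ge> 0" using A by simp
    have mlam: "?m / lam < eh" using A by (simp add: field_simps power2_eq_square)
    have hd: "\<And>\<mu> \<nu> \<kappa> i p. length \<kappa> < 4 \<Longrightarrow>
          (\<lambda>t. ipd \<kappa> (\<lambda>q. h1 cutoff ?m lam g q $ \<mu> $ \<nu>) (p + t *\<^sub>R axis i 1)) differentiable (at 0)"
      using A by blast
    have hb: "\<And>\<mu> \<nu> \<kappa> p. length \<kappa> \<le> 4 \<Longrightarrow>
          \<bar>ipd \<kappa> (\<lambda>q. h1 cutoff ?m lam g q $ \<mu> $ \<nu>) p\<bar>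
          \<le> inverse lam ^ length \<kappa> * (dh * (1 + \<bar>p$0\<bar> / lam) powr dh
             / ((1 + (spnorm p + \<bar>p$0\<bar>) / lam)
                * (1 + max 0 (spnorm p - \<bar>p$0\<bar>) / lam) powr \<gamma>0))"
      using A by blast
    have C0: "C0 > 0" using assms(5) .
    have dhp: "dh > 0" using dh C0 eh by simp
    have ehsmall: "(C0 + 3) * eh < 1/8"
    proof -
      have "(C0 + 3) * eh < (C0 + 3) * e0" using eh C0 by simp
      also have "\<dots> = 1/8" using C0 by (simp add: e0_def)
      finally show ?thesis .
    qed
    have dh1: "dh \<le> 1" using ehsmall dh eh C0 by (simp add: algebra_simps)
    define Ap where "Ap = (\<lambda>p::real^4. (1 + \<bar>p$0\<bar> / lam) powr dh)"
    define Dn where "Dn = (\<lambda>p::real^4. 1 + \<bar>p$0\<bar> / lam + spnorm p / lam)"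
    define Kp where "Kp = (\<lambda>p. Ap p / Dn p)"
    have sp0: "spnorm p \<ge> 0" for p by (simp add: spnorm_def)
    have Dn1: "Dn p \<ge> 1" for p using lam sp0[of p] by (simp add: Dn_def)
    have Ap1: "Ap p \<ge> 1" for p unfolding Ap_def using lam dhp by (intro ge_one_powr_ge_zero) auto
    have Aple: "Ap p \<le> 1 + \<bar>p$0\<bar> / lam" for p
    proof -
      have "Ap p \<le> (1 + \<bar>p$0\<bar> / lam) powr 1" unfolding Ap_def using lam dh1 by (intro powr_mono) auto
      then show ?thesis using lam by simp
    qed
    have Kp1: "Kp p \<le> 1" for p
    proof -
      have "spnorm p / lam \<ge> 0" using sp0[of p] lam by simp
      then have "Ap p \<le> Dn p" using Aple[of p] unfolding Dn_def by linarith
      then show ?thesis using Dn1[of p] by (simp add: Kp_def)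
    qed
    have Kp0: "Kp p > 0" for p using Ap1[of p] Dn1[of p] by (simp add: Kp_def)
    have F1: "?m / (lam + \<bar>p$0\<bar> + spnorm p) \<le> dh * Kp p / C0" for p
    proof -
      have e: "lam + \<bar>p$0\<bar> + spnorm p = lam * Dn p" using lam by (simp add: Dn_def field_simps)
      have "?m / (lam + \<bar>p$0\<bar> + spnorm p) = (?m / lam) / Dn p" unfolding e by simp
      also have "\<dots> \<le> eh / Dn p" using mlam Dn1[of p] by (intro divide_right_mono) auto
      also have "\<dots> \<le> eh * Ap p / Dn p" using Ap1[of p] Dn1[of p] eh
        by (intro divide_right_mono) (auto simp: mult_le_cancel_left1)
      also have "\<dots> = dh * Kp p / C0" using C0 by (simp add: dh Kp_def)
      finally show ?thesis .
    qed
    have F2: "\<bar>h1 cutoff ?m lam g p $ k $ l\<bar> \<le> dh * Kp p" for p k l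
    proof -
      have "\<bar>h1 cutoff ?m lam g p $ k $ l\<bar> \<le> inverse lam ^ 0 * (dh * (1 + \<bar>p$0\<bar> / lam) powr dh
             / ((1 + (spnorm p + \<bar>p$0\<bar>) / lam)
                * (1 + max 0 (spnorm p - \<bar>p$0\<bar>) / lam) powr \<gamma>0))"
        using hb[where \<kappa>="[]" and \<mu>=k and \<nu>=l and p=p] by simp
      also have "\<dots> \<le> dh * Kp p"
      proof -
        have P1: "(1 + max 0 (spnorm p - \<bar>p$0\<bar>) / lam) powr \<gamma>0 \<ge> 1"
          using lam assms(6) by (intro ge_one_powr_ge_zero) auto
        have e: "1 + (spnorm p + \<bar>p$0\<bar>) / lam = Dn p" using lam by (simp add: Dn_def field_simps)
        have "dh * Ap p / (Dn p * (1 + max 0 (spnorm p - \<bar>p$0\<bar>) / lam) powr \<gamma>0) \<le> dh * Ap p / Dn p"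
          using P1 Dn1[of p] Ap1[of p] dhp
          by (intro div_le_aux mult_nonneg_nonneg) auto
        then show ?thesis by (simp add: e Ap_def Kp_def)
      qed
      finally show ?thesis .
    qed
    have F3: "\<bar>h0 cutoff ?m lam p $ k $ l\<bar> \<le> 3 * (dh * Kp p / C0)" for p k l
    proof (cases "k = l")
      case True
      have "\<bar>h0 cutoff ?m lam p $ k $ l\<bar> = \<bar>cutoff (spnorm p / (lam + \<bar>p$0\<bar>)) * ?m / spnorm p\<bar>"
        using True by (simp add: h0_def)
      also have "\<dots> \<le> 3 * ?m / (lam + \<bar>p$0\<bar> + spnorm p)"
        by (rule phi_val) (use assms(2,3) lam mpos sp0 in auto)
      also have "\<dots> \<le> 3 * (dh * Kp p / C0)" using F1[of p] by simp
      finally show ?thesis .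
    next
      case False
      then show ?thesis using dhp Kp0[of p] C0 by (simp add: h0_def)
    qed
    have gsplit: "g p $ k $ l = h1 cutoff ?m lam g p $ k $ l + eta $ k $ l + h0 cutoff ?m lam p $ k $ l" for p k l
      by (simp add: h1_def)
    have F4: "\<bar>(g p - eta) $ k $ l\<bar> \<le> dh * Kp p * (1 + 3 / C0)" for p k l
    proof -
      have "\<bar>(g p - eta) $ k $ l\<bar> \<le> \<bar>h1 cutoff ?m lam g p $ k $ l\<bar> + \<bar>h0 cutoff ?m lam p $ k $ l\<bar>"
        using gsplit[of p k l] by simp
      also have "\<dots> \<le> dh * Kp p + 3 * (dh * Kp p / C0)" using F2 F3 by (rule add_mono)
      also have "\<dots> = dh * Kp p * (1 + 3 / C0)" by (simp add: algebra_simps)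
      finally show ?thesis .
    qed
    have F5: "\<forall>k l. \<bar>(g p - eta) $ k $ l\<bar> \<le> 1/8" for p
    proof (intro allI)
      fix k l
      have "dh * Kp p * (1 + 3 / C0) \<le> dh * 1 * (1 + 3 / C0)"
        using Kp1[of p] dhp C0 by (intro mult_right_mono mult_left_mono) auto
      also have "\<dots> = (C0 + 3) * eh" using C0 by (simp add: dh field_simps)
      finally show "\<bar>(g p - eta) $ k $ l\<bar> \<le> 1/8" using F4[of p k l] ehsmall by linarith
    qed
    have inv: "invertible (g p)" for p using lor lor_inv by blast
    have Hrep: "Hinv g p = matrix_inv (g p) - eta" for p by (simp add: Hinv_def eta_inv)
    have P1: "\<bar>Hinv g p $ \<mu> $ \<nu>\<bar> \<le> 8 * (1 + 3 / C0) * (dh * Kp p)" for p \<mu> \<nu>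
    proof -
      have "\<bar>Hinv g p $ \<mu> $ \<nu>\<bar> \<le> 2 * (\<Sum>l\<in>UNIV. \<bar>(g p - eta) $ \<mu> $ l\<bar>)"
        unfolding Hrep by (rule H_bound[OF inv F5])
      also have "\<dots> \<le> 2 * (\<Sum>l\<in>(UNIV::4 set). dh * Kp p * (1 + 3 / C0))"
        by (intro mult_left_mono sum_mono F4) auto
      also have "\<dots> = 8 * (1 + 3 / C0) * (dh * Kp p)" by simp
      finally show ?thesis .
    qed
    have rhs: "C * dh * (1 + \<bar>p$0\<bar> / lam) powr dh / (1 + \<bar>p$0\<bar> / lam + spnorm p / lam) = C * (dh * Kp p)" for p
      by (simp add: Kp_def Ap_def Dn_def)
    fix p \<mu> \<nu> \<alpha>
    show "\<bar>Hinv g p $ \<mu> $ \<nu>\<bar>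
            \<le> C * dh * (1 + \<bar>p$0\<bar> / lam) powr dh / (1 + \<bar>p$0\<bar> / lam + spnorm p / lam)
        \<and> (\<forall>D. ((\<lambda>t. Hinv g (p + t *\<^sub>R axis \<alpha> 1) $ \<mu> $ \<nu>) has_real_derivative D) (at 0) \<longrightarrow>
             \<bar>Hinv g p $ \<mu> $ \<nu>\<bar> + lam * \<bar>D\<bar>
               \<le> C * dh * (1 + \<bar>p$0\<bar> / lam) powr dh / (1 + \<bar>p$0\<bar> / lam + spnorm p / lam))"
    proof (intro conjI allI impI)
      have CC: "8 * (1 + 3 / C0) \<le> C" using C0 K00 by (simp add: C_def)
      have dK: "dh * Kp p \<ge> 0" using dhp Kp0[of p] by simp
      show "\<bar>Hinv g p $ \<mu> $ \<nu>\<bar> \<le> C * dh * (1 + \<bar>p$0\<bar> / lam) powr dh / (1 + \<bar>p$0\<bar> / lam + spnorm p / lam)"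
        unfolding rhs using P1[of p \<mu> \<nu>] mult_right_mono[OF CC dK] by linarith
      fix D
      assume dD: "((\<lambda>t. Hinv g (p + t *\<^sub>R axis \<alpha> 1) $ \<mu> $ \<nu>) has_real_derivative D) (at 0)"
      define q where "q = (\<lambda>t::real. p + t *\<^sub>R axis \<alpha> 1)"
      have q0: "q 0 = p" by (simp add: q_def)
      have gd: "\<exists>E. ((\<lambda>t. g (q t) $ k $ l) has_real_derivative E) (at_right 0) \<and> lam * \<bar>E\<bar> \<le> dh * Kp p * (1 + K0 / C0)" for k l
      proof -
        let ?f = "\<lambda>x. h1 cutoff ?m lam g x $ k $ l"
        have "(\<lambda>t. ?f (q t)) differentiable (at 0)" using hd[where \<kappa>="[]" and \<mu>=k and \<nu>=l and i=\<alpha> and p=p] by (simp add: q_def)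
        then have d1: "((\<lambda>t. ?f (q t)) has_real_derivative pd \<alpha> ?f p) (at 0)"
          unfolding pd_def q_def using DERIV_deriv_iff_real_differentiable by blast
        have b1: "lam * \<bar>pd \<alpha> ?f p\<bar> \<le> dh * Kp p"
        proof -
          have "\<bar>pd \<alpha> ?f p\<bar> \<le> inverse lam ^ 1 * (dh * (1 + \<bar>p$0\<bar> / lam) powr dh
             / ((1 + (spnorm p + \<bar>p$0\<bar>) / lam)
                * (1 + max 0 (spnorm p - \<bar>p$0\<bar>) / lam) powr \<gamma>0))"
            using hb[where \<kappa>="[\<alpha>]" and \<mu>=k and \<nu>=l and p=p] by simp
          also have "(dh * (1 + \<bar>p$0\<bar> / lam) powr dh
             / ((1 + (spnorm p + \<bar>p$0\<bar>) / lam)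
                * (1 + max 0 (spnorm p - \<bar>p$0\<bar>) / lam) powr \<gamma>0)) \<le> dh * Kp p"
          proof -
            have P1: "(1 + max 0 (spnorm p - \<bar>p$0\<bar>) / lam) powr \<gamma>0 \<ge> 1"
              using lam assms(6) by (intro ge_one_powr_ge_zero) auto
            have e: "1 + (spnorm p + \<bar>p$0\<bar>) / lam = Dn p" using lam by (simp add: Dn_def field_simps)
            have "dh * Ap p / (Dn p * (1 + max 0 (spnorm p - \<bar>p$0\<bar>) / lam) powr \<gamma>0) \<le> dh * Ap p / Dn p"
              using P1 Dn1[of p] Ap1[of p] dhp
              by (intro div_le_aux mult_nonneg_nonneg) auto
            then show ?thesis by (simp add: e Ap_def Kp_def)
          qed
          then have "inverse lam ^ 1 * (dh * (1 + \<bar>p$0\<bar> / lam) powr dh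
             / ((1 + (spnorm p + \<bar>p$0\<bar>) / lam)
                * (1 + max 0 (spnorm p - \<bar>p$0\<bar>) / lam) powr \<gamma>0)) \<le> inverse lam * (dh * Kp p)"
            unfolding power_one_right by (rule mult_left_mono) (use lam in auto)
          finally have "\<bar>pd \<alpha> ?f p\<bar> \<le> inverse lam * (dh * Kp p)" .
          then have "lam * \<bar>pd \<alpha> ?f p\<bar> \<le> lam * (inverse lam * (dh * Kp p))"
            by (rule mult_left_mono) (use lam in auto)
          also have "\<dots> = dh * Kp p" using lam by simp
          finally show ?thesis .
        qed
        obtain E0 where d0: "((\<lambda>t. h0 cutoff ?m lam (q t) $ k $ l) has_real_derivative E0) (at_right 0)"
          and b0: "lam * \<bar>E0\<bar> \<le> K0 * ?m / (lam + \<bar>p$0\<bar> + spnorm p)"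
        proof (cases "k = l")
          case True
          have c0ax: "0 \<le> axis \<alpha> (1::real) $ 0" by (simp add: axis_comp)
          obtain T' where T': "((\<lambda>t. \<bar>p$0 + t * axis \<alpha> 1 $ 0\<bar>) has_real_derivative T') (at_right 0)"
            "\<bar>T'\<bar> \<le> \<bar>axis \<alpha> (1::real) $ 0\<bar>"
            using abs_rderiv[OF c0ax, of "p$0"] by blast
          have T'': "((\<lambda>t. \<bar>q t $ 0\<bar>) has_real_derivative T') (at_right 0)"
            using T'(1) by (simp add: q_def)
          have T'b: "\<bar>T'\<bar> \<le> 1" using T'(2) by (simp add: axis_comp split: if_splits)
          have "\<exists>E. ((\<lambda>t. cutoff (spnorm (q t) / (lam + \<bar>q t $ 0\<bar>)) * ?m / spnorm (q t)) has_real_derivative E) (at_right 0)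
             \<and> lam * \<bar>E\<bar> \<le> (8*B+6) * ?m / (lam + \<bar>q 0 $ 0\<bar> + spnorm (q 0))"
          proof (rule phi_rderiv[OF cd assms(2,3,4) B lam mpos _ _ _ _ T'' T'b])
            show "\<forall>t. spnorm (q t) \<ge> 0" using sp0 by blast
            show "isCont (\<lambda>t. spnorm (q t)) 0" unfolding q_def by (rule sp_cont)
            show "0 < spnorm (q 0) \<Longrightarrow> \<exists>S'. ((\<lambda>t. spnorm (q t)) has_real_derivative S') (at 0) \<and> \<bar>S'\<bar> \<le> 1"
              unfolding q_def using sp_deriv by simp
            show "\<forall>t. \<bar>q t $ 0\<bar> \<ge> 0" by simp
          qed
          then obtain E where "((\<lambda>t. cutoff (spnorm (q t) / (lam + \<bar>q t $ 0\<bar>)) * ?m / spnorm (q t)) has_real_derivative E) (at_right 0)"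
             "lam * \<bar>E\<bar> \<le> K0 * ?m / (lam + \<bar>p $ 0\<bar> + spnorm p)"
            unfolding q0 K0_def by blast
          moreover have "(\<lambda>t. h0 cutoff ?m lam (q t) $ k $ l) = (\<lambda>t. cutoff (spnorm (q t) / (lam + \<bar>q t $ 0\<bar>)) * ?m / spnorm (q t))"
            using True by (simp add: h0_def)
          ultimately show ?thesis using that by auto
        next
          case False
          have "(\<lambda>t. h0 cutoff ?m lam (q t) $ k $ l) = (\<lambda>t. 0)" using False by (simp add: h0_def)
          moreover have "0 \<le> K0 * ?m / (lam + \<bar>p$0\<bar> + spnorm p)"
            by (rule divide_nonneg_nonneg[OF mult_nonneg_nonneg]) (use K00 mpos lam sp0[of p] in auto)
          ultimately show ?thesis using that[of 0] by simp
        qed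
        have "((\<lambda>t. ?f (q t) + eta $ k $ l + h0 cutoff ?m lam (q t) $ k $ l) has_real_derivative pd \<alpha> ?f p + 0 + E0) (at_right 0)"
          by (intro DERIV_add has_field_derivative_at_within[OF d1] DERIV_const d0)
        then have "((\<lambda>t. g (q t) $ k $ l) has_real_derivative pd \<alpha> ?f p + E0) (at_right 0)"
          by (simp add: gsplit[symmetric])
        moreover have "lam * \<bar>pd \<alpha> ?f p + E0\<bar> \<le> dh * Kp p * (1 + K0 / C0)"
        proof -
          have "lam * \<bar>pd \<alpha> ?f p + E0\<bar> \<le> lam * \<bar>pd \<alpha> ?f p\<bar> + lam * \<bar>E0\<bar>"
            using lam by (simp add: distrib_left[symmetric] abs_triangle_ineq mult_left_mono)
          also have "\<dots> \<le> dh * Kp p + K0 * (dh * Kp p / C0)"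
          proof (rule add_mono[OF b1])
            have "K0 * ?m / (lam + \<bar>p$0\<bar> + spnorm p) = K0 * (?m / (lam + \<bar>p$0\<bar> + spnorm p))" by simp
            also have "\<dots> \<le> K0 * (dh * Kp p / C0)" using F1[of p] K00 by (rule mult_left_mono)
            finally show "lam * \<bar>E0\<bar> \<le> K0 * (dh * Kp p / C0)" using b0 by linarith
          qed
          also have "\<dots> = dh * Kp p * (1 + K0 / C0)" by (simp add: algebra_simps)
          finally show ?thesis .
        qed
        ultimately show ?thesis by blast
      qed
      then obtain E where E: "\<And>k l. ((\<lambda>t. g (q t) $ k $ l) has_real_derivative E k l) (at_right 0)"
        "\<And>k l. lam * \<bar>E k l\<bar> \<le> dh * Kp p * (1 + K0 / C0)"
        by metis
      let ?F = "\<lambda>t. Hinv g (q t) $ \<mu> $ \<nu>"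
      have lD: "((\<lambda>t. (?F t - ?F 0) / (t - 0)) \<longlongrightarrow> D) (at_right 0)"
        using has_field_derivative_at_within[OF dD, of "{0<..}"]
        unfolding has_field_derivative_iff q_def by simp
      have qE: "((\<lambda>t. (g (q t) $ k $ l - g (q 0) $ k $ l) / (t - 0)) \<longlongrightarrow> E k l) (at_right 0)" for k l
        using E(1)[of k l] unfolding has_field_derivative_iff .
      have lE: "((\<lambda>t. 4 * (\<Sum>k\<in>UNIV. \<Sum>l\<in>UNIV. \<bar>(g (q t) $ k $ l - g (q 0) $ k $ l) / (t - 0)\<bar>))
          \<longlongrightarrow> 4 * (\<Sum>k\<in>UNIV. \<Sum>l\<in>UNIV. \<bar>E k l\<bar>)) (at_right 0)"
        by (intro tendsto_intros qE)
      have ev: "eventually (\<lambda>t. \<bar>(?F t - ?F 0) / (t - 0)\<bar> \<le>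
          4 * (\<Sum>k\<in>UNIV. \<Sum>l\<in>UNIV. \<bar>(g (q t) $ k $ l - g (q 0) $ k $ l) / (t - 0)\<bar>)) (at_right 0)"
      proof (rule eventually_at_rightI[of 0 1])
        fix t :: real assume "t \<in> {0<..<1}"
        then have t: "t > 0" by simp
        have "?F t - ?F 0 = (matrix_inv (g (q t)) - matrix_inv (g (q 0))) $ \<mu> $ \<nu>"
          by (simp add: Hrep)
        then have "\<bar>?F t - ?F 0\<bar> \<le> 4 * (\<Sum>k\<in>UNIV. \<Sum>l\<in>UNIV. \<bar>(g (q t) - g (q 0)) $ k $ l\<bar>)"
          using inv_diff[OF inv inv F5 F5] by simp
        then have "\<bar>?F t - ?F 0\<bar> / t \<le> 4 * (\<Sum>k\<in>UNIV. \<Sum>l\<in>UNIV. \<bar>(g (q t) - g (q 0)) $ k $ l\<bar>) / t"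
          using t by (intro divide_right_mono) auto
        also have "\<dots> = 4 * (\<Sum>k\<in>UNIV. \<Sum>l\<in>UNIV. \<bar>(g (q t) $ k $ l - g (q 0) $ k $ l) / t\<bar>)"
          using t by (simp add: abs_divide sum_divide_distrib[symmetric])
        finally show "\<bar>(?F t - ?F 0) / (t - 0)\<bar> \<le>
          4 * (\<Sum>k\<in>UNIV. \<Sum>l\<in>UNIV. \<bar>(g (q t) $ k $ l - g (q 0) $ k $ l) / (t - 0)\<bar>)"
          using t by (simp add: abs_divide)
      qed simp
      have Db: "\<bar>D\<bar> \<le> 4 * (\<Sum>k\<in>UNIV. \<Sum>l\<in>UNIV. \<bar>E k l\<bar>)"
        by (rule tendsto_le[OF trivial_limit_at_right_real lE tendsto_rabs[OF lD] ev])
      have "lam * \<bar>D\<bar> \<le> 4 * (\<Sum>k\<in>UNIV. \<Sum>l\<in>UNIV. lam * \<bar>E k l\<bar>)"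
        using mult_left_mono[OF Db, of lam] lam by (simp add: sum_distrib_left mult.left_commute)
      also have "\<dots> \<le> 4 * (\<Sum>k\<in>(UNIV::4 set). \<Sum>l\<in>(UNIV::4 set). dh * Kp p * (1 + K0 / C0))"
        by (intro mult_left_mono sum_mono E(2)) auto
      also have "\<dots> = 64 * (1 + K0 / C0) * (dh * Kp p)" by simp
      finally have "lam * \<bar>D\<bar> \<le> 64 * (1 + K0 / C0) * (dh * Kp p)" .
      show "\<bar>Hinv g p $ \<mu> $ \<nu>\<bar> + lam * \<bar>D\<bar>
               \<le> C * dh * (1 + \<bar>p$0\<bar> / lam) powr dh / (1 + \<bar>p$0\<bar> / lam + spnorm p / lam)"
      proof -
        have "\<bar>Hinv g p $ \<mu> $ \<nu>\<bar> + lam * \<bar>D\<bar> \<le> 8 * (1 + 3 / C0) * (dh * Kp p) + 64 * (1 + K0 / C0) * (dh * Kp p)"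
          using P1[of p \<mu> \<nu>] \<open>lam * \<bar>D\<bar> \<le> 64 * (1 + K0 / C0) * (dh * Kp p)\<close> by linarith
        also have "\<dots> = C * (dh * Kp p)" by (simp add: C_def algebra_simps)
        finally have X: "\<bar>Hinv g p $ \<mu> $ \<nu>\<bar> + lam * \<bar>D\<bar> \<le> C * (dh * Kp p)" .
        show ?thesis unfolding rhs by (rule X)
      qed
    qed
  qed
  show ?thesis using e0p main by blast
qed

end
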